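(* Let $a_{01},a_{10}>0$, $a_\triangle=a_{01}+a_{10}$, and let $x_\triangle\ge 0$ be a fixed integer. Under $H$, let $\theta\in(0,1)$ have prior $p_H(\theta)=\mathrm{Beta}(\theta\mid a_{01},a_{10})$, and let imaginary data $x_{01}\in\{0,\dots,x_\triangle\}$ have conditional sampling distribution $h(x_{01}\mid x_\triangle,\theta)=\binom{x_\triangle}{x_{01}}\theta^{x_{01}}(1-\theta)^{x_\triangle-x_{01}}$; under $H_0$, $\theta=1/2$. Define $$BF^{Co}_{H,H_0}(x)=\frac{\int_0^1 h(x_{01}\mid x_\triangle,\theta)p_H(\theta)\,d\theta}{h(x_{01}\mid x_\triangle,1/2)}$$ and the conditionally-intrinsic prior $p^{CI}_H(\theta\mid H_0)=p_H(\theta)\,E_\theta\big[BF^{Co}_{H,H_0}(x)^{-1}\big]$, the expectation being with respect to $x_{01}\sim h(\cdot\mid x_\triangle,\theta)$. Then $$p^{CI}_H(\theta\mid H_0)=\sum_{x_{01}=0}^{x_\triangle}\binom{x_\triangle}{x_{01}}\left(\frac12\right)^{x_\triangle}\mathrm{Beta}\big(\theta\mid a_{01}+x_{01},\,a_\triangle-a_{01}+x_\triangle-x_{01}\big).$$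
   Context: $\mathrm{Beta}(\theta\mid A,B)=\theta^{A-1}(1-\theta)^{B-1}/B(A,B)$ denotes the Beta density with parameters $A,B>0$ evaluated at $\theta$, where $B(A,B)=\int_0^1t^{A-1}(1-t)^{B-1}dt$. In the paper's motivation, $\theta$ is the conditional probability of a $0\to1$ swing given a swing in a matched-pair $2\times2$ table, $x_{01}$ and $x_{10}=x_\triangle-x_{01}$ are imaginary off-diagonal counts, and the Beta$(a_{01},a_{10})$ prior arises from a Dirichlet$(a_{00},a_{01},a_{10},a_{11})$ prior on the cell probabilities. *)

theory Defs
  imports "HOL-Analysis.Analysis"
begin

text \<open>Beta density Beta(theta | A, B) = theta^(A-1) (1-theta)^(B-1) / B(A,B),
  with B(A,B) the library Beta function Gamma A Gamma B / Gamma (A+B),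
  which equals the integral of t^(A-1)(1-t)^(B-1) over [0,1] for A,B > 0.\<close>
definition beta_density :: "real \<Rightarrow> real \<Rightarrow> real \<Rightarrow> real" where
  "beta_density A B \<theta> = \<theta> powr (A - 1) * (1 - \<theta>) powr (B - 1) / Beta A B"

definition binom_h :: "nat \<Rightarrow> nat \<Rightarrow> real \<Rightarrow> real" where
  "binom_h x01 xt \<theta> = real (xt choose x01) * \<theta> ^ x01 * (1 - \<theta>) ^ (xt - x01)"

definition BF_Co :: "real \<Rightarrow> real \<Rightarrow> nat \<Rightarrow> nat \<Rightarrow> real" where
  "BF_Co a01 a10 xt x01 =
     integral {0..1} (\<lambda>\<theta>. binom_h x01 xt \<theta> * beta_density a01 a10 \<theta>)
     / binom_h x01 xt (1/2)"

definition CI_prior :: "real \<Rightarrow> real \<Rightarrow> nat \<Rightarrow> real \<Rightarrow> real" where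
  "CI_prior a01 a10 xt \<theta> =
     beta_density a01 a10 \<theta> *
     (\<Sum>x01 = 0..xt. binom_h x01 xt \<theta> * inverse (BF_Co a01 a10 xt x01))"

end

theory Submission
  imports Defs
begin

lemma Beta_pos_real: "(a::real) > 0 \<Longrightarrow> b > 0 \<Longrightarrow> Beta a b > 0"
  by (simp add: Beta_def Gamma_real_pos)

lemma pointwise:
  fixes a b t :: real
  assumes "0 < t" "t < 1" "k \<le> n"
  shows "binom_h k n t * beta_density a b t =
     real (n choose k) / Beta a b * (t powr (a + real k - 1) * (1 - t) powr (b + real (n - k) - 1))"
proof -
  have 1: "t ^ k = t powr real k" using assms by (simp add: powr_realpow)
  have 2: "(1 - t) ^ (n - k) = (1 - t) powr real (n - k)" using assms powr_realpow[of "1-t" "n-k"] by simp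
  have 3: "t powr (a + real k - 1) = t powr real k * t powr (a - 1)"
    by (simp add: powr_add[symmetric] algebra_simps)
  have 4: "(1 - t) powr (b + real (n - k) - 1) = (1 - t) powr real (n - k) * (1 - t) powr (b - 1)"
    by (simp add: powr_add[symmetric] algebra_simps)
  show ?thesis unfolding binom_h_def beta_density_def 1 2 3 4 by simp
qed

lemma integral_val:
  fixes a b :: real
  assumes "a > 0" "b > 0" "k \<le> n"
  shows "integral {0..1} (\<lambda>t. binom_h k n t * beta_density a b t) =
     real (n choose k) / Beta a b * Beta (a + real k) (b + real (n - k))"
proof -
  have "((\<lambda>t. t powr (a + real k - 1) * (1 - t) powr (b + real (n - k) - 1))
          has_integral Beta (a + real k) (b + real (n - k))) {0..1}"
    using assms by (intro has_integral_Beta_real) auto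
  then have "((\<lambda>t. t powr (a + real k - 1) * (1 - t) powr (b + real (n - k) - 1))
          has_integral Beta (a + real k) (b + real (n - k))) {0<..<1}"
    by (simp add: has_integral_Icc_iff_Ioo)
  then have "((\<lambda>t. real (n choose k) / Beta a b * (t powr (a + real k - 1) * (1 - t) powr (b + real (n - k) - 1)))
          has_integral real (n choose k) / Beta a b * Beta (a + real k) (b + real (n - k))) {0<..<1}"
    by (rule has_integral_mult_right)
  then have "((\<lambda>t. binom_h k n t * beta_density a b t)
          has_integral real (n choose k) / Beta a b * Beta (a + real k) (b + real (n - k))) {0<..<1}"
    by (rule has_integral_cong[THEN iffD1, rotated]) (use pointwise assms in auto)
  then have "((\<lambda>t. binom_h k n t * beta_density a b t)
          has_integral real (n choose k) / Beta a b * Beta (a + real k) (b + real (n - k))) {0..1}"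
    by (simp add: has_integral_Icc_iff_Ioo)
  then show ?thesis by (rule integral_unique)
qed

theorem proposition5:
  fixes a01 a10 \<theta> :: real and xt :: nat
  assumes "a01 > 0" and "a10 > 0"
    and "0 < \<theta>" and "\<theta> < 1"
  shows "CI_prior a01 a10 xt \<theta> =
    (\<Sum>x01 = 0..xt. real (xt choose x01) * (1/2) ^ xt *
       beta_density (a01 + real x01) ((a01 + a10) - a01 + real (xt - x01)) \<theta>)"
  unfolding CI_prior_def sum_distrib_left
proof (rule sum.cong[OF refl])
  fix k assume k: "k \<in> {0..xt}"
  hence kn: "k \<le> xt" by auto
  have B1: "Beta a01 a10 > 0" using assms by (simp add: Beta_pos_real)
  have B2: "Beta (a01 + real k) (a10 + real (xt - k)) > 0" using assms by (simp add: Beta_pos_real)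
  have C: "real (xt choose k) > 0" using kn by simp
  have h2: "binom_h k xt (1/2) = real (xt choose k) * (1/2)^xt"
    unfolding binom_h_def using kn by (simp add: power_add[symmetric])
  have BF: "BF_Co a01 a10 xt k = Beta (a01 + real k) (a10 + real (xt - k)) / (Beta a01 a10 * (1/2)^xt)"
    unfolding BF_Co_def integral_val[OF assms(1,2) kn] h2 using C by (simp add: field_simps)
  have pw: "binom_h k xt \<theta> * beta_density a01 a10 \<theta> =
     real (xt choose k) / Beta a01 a10 * (\<theta> powr (a01 + real k - 1) * (1 - \<theta>) powr (a10 + real (xt - k) - 1))"
    using pointwise assms kn by blast
  show "beta_density a01 a10 \<theta> * (binom_h k xt \<theta> * inverse (BF_Co a01 a10 xt k)) =
    real (xt choose k) * (1/2) ^ xt *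
       beta_density (a01 + real k) ((a01 + a10) - a01 + real (xt - k)) \<theta>"
  proof -
    have "beta_density a01 a10 \<theta> * (binom_h k xt \<theta> * inverse (BF_Co a01 a10 xt k))
       = (binom_h k xt \<theta> * beta_density a01 a10 \<theta>) * inverse (BF_Co a01 a10 xt k)" by simp
    also have "\<dots> = real (xt choose k) * (1/2) ^ xt *
       beta_density (a01 + real k) (a10 + real (xt - k)) \<theta>"
      unfolding pw BF using B1 B2 unfolding beta_density_def by (simp add: field_simps)
    finally show ?thesis by simp
  qed
qed

end
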